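(* Let $A\ge1$, $K\ge1$, let $N$ be a positive integer and $C=N+1$, and let $\eta>0$ satisfy $\eta\le\frac{1}{270C}$. Consider optimistic online mirror descent with the log-barrier regularizer on $\Delta_A$: $\pi_1'=\pi_1=\frac1A\mathbf{1}$, and for $k=1,\dots,K$, a vector $\hat\beta_k\in\mathbb{R}_+^A$ is received satisfying $\sum_a\pi_k(a)\hat\beta_k(a)\le C$, and then $$\pi_{k+1}'=\arg\max_{\pi\in\Delta_A}\left\{\langle\pi,\hat\beta_k\rangle-D_\psi(\pi,\pi_k')\right\},\qquad \pi_{k+1}=\arg\max_{\pi\in\Delta_A}\left\{\langle\pi,\hat\beta_k\rangle-D_\psi(\pi,\pi_{k+1}')\right\}.$$ Then for every $k$ and every action $a$, $$|\pi_{k+1}(a)-\pi_k(a)|\le 120\,\eta\,C\,\pi_k(a).$$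
   Context: $\Delta_A$ is the probability simplex over $A$ actions. The regularizer is $\psi(x)=\frac1\eta\sum_{a=1}^A\log\frac{1}{x(a)}$ for $x\in\mathbb{R}_{+}^A$ (positive coordinates), and $D_\psi(x,x')=\psi(x)-\psi(x')-\langle\nabla\psi(x'),x-x'\rangle$ is its Bregman divergence. The vectors $\hat\beta_k$ may be chosen arbitrarily (adaptively) subject to the stated constraint. *)

theory Defs
  imports "HOL-Analysis.Analysis"
begin

text \<open>Actions are the elements of a finite type 'a, so A = CARD('a) \<ge> 1.\<close>

definition prob_simplex :: "('a::finite \<Rightarrow> real) set" where
  "prob_simplex = {x. (\<forall>a. 0 \<le> x a) \<and> (\<Sum>a\<in>UNIV. x a) = 1}"

definition pos_orthant :: "('a::finite \<Rightarrow> real) set" where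
  "pos_orthant = {x. \<forall>a. 0 < x a}"

definition logbar :: "real \<Rightarrow> ('a::finite \<Rightarrow> real) \<Rightarrow> real" where
  "logbar \<eta> x = (1 / \<eta>) * (\<Sum>a\<in>UNIV. ln (1 / x a))"

definition logbar_grad :: "real \<Rightarrow> ('a::finite \<Rightarrow> real) \<Rightarrow> 'a \<Rightarrow> real" where
  "logbar_grad \<eta> x a = - (1 / \<eta>) / x a"

definition bregman :: "real \<Rightarrow> ('a::finite \<Rightarrow> real) \<Rightarrow> ('a \<Rightarrow> real) \<Rightarrow> real" where
  "bregman \<eta> x x' = logbar \<eta> x - logbar \<eta> x'
      - (\<Sum>a\<in>UNIV. logbar_grad \<eta> x' a * (x a - x' a))"

definition ip :: "('a::finite \<Rightarrow> real) \<Rightarrow> ('a \<Rightarrow> real) \<Rightarrow> real" where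
  "ip x y = (\<Sum>a\<in>UNIV. x a * y a)"

definition omd_step :: "real \<Rightarrow> ('a::finite \<Rightarrow> real) \<Rightarrow> ('a \<Rightarrow> real) \<Rightarrow> ('a \<Rightarrow> real) \<Rightarrow> bool" where
  "omd_step \<eta> \<beta> ref p =
     is_arg_max (\<lambda>q. ip q \<beta> - bregman \<eta> q ref) (\<lambda>q. q \<in> prob_simplex \<inter> pos_orthant) p"

end

theory Submission
  imports Defs
begin

lemma ln_concave_pt:
  fixes t u :: real
  assumes "0 \<le> t" "t \<le> 1" "u > -1"
  shows "t * ln (1 + u) \<le> ln (1 + t * u)"
proof -
  have "(1 - t) * ln 1 + t * ln (1 + u) \<le> ln ((1 - t) *\<^sub>R 1 + t *\<^sub>R (1 + u))"
    using concave_onD[OF ln_concave, of t 1 "1+u"] assms by auto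
  moreover have "(1 - t) *\<^sub>R 1 + t *\<^sub>R (1 + u) = 1 + t * u" by (simp add: algebra_simps)
  ultimately show ?thesis by (metis ln_one mult_zero_right add_0)
qed

lemma ln_quad:
  fixes v :: real
  assumes "\<bar>v\<bar> \<le> 1/2"
  shows "v\<^sup>2 / 3 \<le> v - ln (1 + v)"
proof -
  define f where "f = (\<lambda>x::real. ln (1 + x) - x + x\<^sup>2 / 3)"
  have d: "DERIV f x :> (1 / (1 + x) - 1 + 2 * x / 3)" if "x > -1" for x
    unfolding f_def using that
    by (auto intro!: derivative_eq_intros simp: power2_eq_square)
  have eq: "1 / (1 + x) - 1 + 2 * x / 3 = x * (2 * x - 1) / (3 * (1 + x))" if "x > -1" for x :: real
    using that by (simp add: field_simps) (simp add: algebra_simps)?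
  have "f v \<le> 0"
  proof (cases "v \<ge> 0")
    case True
    have "f v \<le> f 0"
    proof (rule DERIV_nonpos_imp_nonincreasing[OF True])
      fix x assume "0 \<le> x" "x \<le> v"
      then have "x > -1" "x \<le> 1/2" using assms by auto
      then show "\<exists>y. DERIV f x :> y \<and> y \<le> 0"
        using d[of x] eq[of x] \<open>0 \<le> x\<close> by (intro exI[of _ "1 / (1 + x) - 1 + 2 * x / 3"])
          (auto intro!: divide_nonpos_pos mult_nonneg_nonpos)
    qed
    then show ?thesis by (simp add: f_def)
  next
    case False
    have "f v \<le> f 0"
    proof (rule DERIV_nonneg_imp_nondecreasing[of v 0 f])
      show "v \<le> 0" using False by simp
    next
      fix x assume "v \<le> x" "x \<le> 0"
      then have "x > -1" using assms by auto
      then show "\<exists>y. DERIV f x :> y \<and> y \<ge> 0"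
        using d[of x] eq[of x] \<open>x \<le> 0\<close> by (intro exI[of _ "1 / (1 + x) - 1 + 2 * x / 3"])
          (auto intro!: divide_nonneg_pos mult_nonpos_nonpos)
    qed
    then show ?thesis by (simp add: f_def)
  qed
  then show ?thesis by (simp add: f_def)
qed

lemma bregman_eq:
  fixes x v :: "'a::finite \<Rightarrow> real"
  assumes x: "\<And>a. x a > 0" and v: "\<And>a. 1 + v a > 0" and eta: "\<eta> > 0"
  shows "bregman \<eta> (\<lambda>a. x a * (1 + v a)) x = (\<Sum>a\<in>UNIV. (v a - ln (1 + v a)) / \<eta>)"
proof -
  have t: "(1/\<eta>) * ln (1 / (x a * (1 + v a))) - (1/\<eta>) * ln (1 / x a)
      - logbar_grad \<eta> x a * (x a * (1 + v a) - x a) = (v a - ln (1 + v a)) / \<eta>" for a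
  proof -
    have l1: "ln (1 / (x a * (1 + v a))) = - ln (x a) - ln (1 + v a)"
      using x[of a] v[of a] by (simp add: ln_div ln_mult)
    have l2: "ln (1 / x a) = - ln (x a)" using x[of a] by (simp add: ln_div)
    have l3: "logbar_grad \<eta> x a * (x a * (1 + v a) - x a) = - v a / \<eta>"
      using x[of a] unfolding logbar_grad_def by (simp add: field_simps)
    show ?thesis apply (subst l1, subst l2, subst l3) using eta by (simp add: field_simps)
  qed
  have "(\<Sum>a\<in>UNIV. (v a - ln (1 + v a)) / \<eta>) = (\<Sum>a\<in>UNIV. (1/\<eta>) * ln (1 / (x a * (1 + v a))) - (1/\<eta>) * ln (1 / x a)
      - logbar_grad \<eta> x a * (x a * (1 + v a) - x a))" using t by simp
  also have "\<dots> = bregman \<eta> (\<lambda>a. x a * (1 + v a)) x"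
    unfolding bregman_def logbar_def by (simp add: sum_subtractf sum_distrib_left)
  finally show ?thesis by simp
qed

lemma obj_diff:
  fixes x v \<beta> :: "'a::finite \<Rightarrow> real"
  assumes x: "\<And>a. x a > 0" and v: "\<And>a. 1 + v a > 0" and eta: "\<eta> > 0"
  shows "(ip (\<lambda>a. x a * (1 + v a)) \<beta> - bregman \<eta> (\<lambda>a. x a * (1 + v a)) x)
       - (ip x \<beta> - bregman \<eta> x x)
       = (\<Sum>a\<in>UNIV. x a * \<beta> a * v a - (v a - ln (1 + v a)) / \<eta>)"
proof -
  have b0: "bregman \<eta> x x = 0"
    using bregman_eq[of x "\<lambda>_. 0" \<eta>] x eta by simp
  have "ip (\<lambda>a. x a * (1 + v a)) \<beta> - ip x \<beta> = (\<Sum>a\<in>UNIV. x a * \<beta> a * v a)"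
    unfolding ip_def sum_subtractf[symmetric] by (intro sum.cong) (auto simp: algebra_simps)
  then show ?thesis
    using b0 bregman_eq[of x v \<eta>] x v eta by (simp add: sum_subtractf)
qed

lemma core:
  fixes x p \<beta> :: "'a::finite \<Rightarrow> real"
  assumes x: "\<And>a. x a > 0" and p: "\<And>a. p a > 0" and bnn: "\<And>a. \<beta> a \<ge> 0"
    and eta: "\<eta> > 0" and B: "B > 0"
    and xb: "(\<Sum>a\<in>UNIV. x a * \<beta> a) \<le> B" and small: "8 * \<eta> * B \<le> 1"
    and opt: "ip x \<beta> - bregman \<eta> x x \<le> ip p \<beta> - bregman \<eta> p x"
  shows "\<bar>p a - x a\<bar> \<le> 4 * \<eta> * B * x a"
proof -
  define u where "u a = (p a - x a) / x a" for a
  have pu: "p = (\<lambda>a. x a * (1 + u a))"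
  proof
    fix a show "p a = x a * (1 + u a)" using x[of a] by (simp add: u_def field_simps)
  qed
  have u1: "1 + u a > 0" for a
    using x[of a] p[of a] by (simp add: u_def field_simps)
  define G where "G v = (\<Sum>a\<in>UNIV. x a * \<beta> a * v a - (v a - ln (1 + v a)) / \<eta>)" for v
  have Gu: "G u \<ge> 0"
    using opt obj_diff[of x u \<eta> \<beta>] x u1 eta unfolding G_def pu by simp
  define r where "r = 4 * \<eta> * B"
  have r0: "r > 0" and r2: "r \<le> 1/2" using eta B small by (auto simp: r_def)
  define S where "S = (\<Sum>a\<in>UNIV. (u a)\<^sup>2)"
  have "S \<le> r\<^sup>2"
  proof (rule ccontr)
    assume "\<not> S \<le> r\<^sup>2"
    then have Sr: "S > r\<^sup>2" by simp
    then have S0: "S > 0" using r0 by (smt (verit) zero_less_power)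
    define t where "t = r / sqrt S"
    have sqS: "sqrt S > r" using Sr r0
      by (metis abs_of_pos real_less_rsqrt)
    have t0: "t > 0" and t1: "t < 1" using sqS r0 S0 by (auto simp: t_def divide_less_eq)
    define v where "v a = t * u a" for a
    have v1: "1 + v a > 0" for a
    proof (cases "u a \<ge> 0")
      case True then have "t * u a \<ge> 0" using t0 by simp
      then show ?thesis by (simp add: v_def)
    next
      case False
      then have "t * u a \<ge> u a" using t1 by (simp add: mult_le_cancel_right1)
      then show ?thesis using u1[of a] by (simp add: v_def)
    qed
    have "G v \<ge> t * G u"
    proof -
      have "t * (x a * \<beta> a * u a - (u a - ln (1 + u a)) / \<eta>)
          \<le> x a * \<beta> a * v a - (v a - ln (1 + v a)) / \<eta>" for a
      proof -
        have "t * ln (1 + u a) \<le> ln (1 + v a)"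
          unfolding v_def using ln_concave_pt[of t "u a"] t0 t1 u1[of a] by simp
        then have "t * ln (1 + u a) / \<eta> \<le> ln (1 + v a) / \<eta>"
          using eta by (simp add: divide_right_mono)
        then show ?thesis by (simp add: v_def algebra_simps diff_divide_distrib)
      qed
      then show ?thesis unfolding G_def sum_distrib_left by (intro sum_mono) auto
    qed
    with Gu t0 have Gv: "G v \<ge> 0" by (smt (verit) mult_nonneg_nonneg)
    have Sv: "(\<Sum>a\<in>UNIV. (v a)\<^sup>2) = r\<^sup>2"
    proof -
      have "(\<Sum>a\<in>UNIV. (v a)\<^sup>2) = t\<^sup>2 * S"
        by (simp add: v_def S_def power_mult_distrib sum_distrib_left)
      also have "\<dots> = r\<^sup>2" using S0 by (simp add: t_def power_divide)
      finally show ?thesis .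
    qed
    have vr: "\<bar>v a\<bar> \<le> r" for a
    proof -
      have "(v a)\<^sup>2 \<le> (\<Sum>a\<in>UNIV. (v a)\<^sup>2)"
        by (rule member_le_sum) auto
      then show ?thesis using Sv r0 by (simp add: power2_le_iff_abs_le)
    qed
    have "G v \<le> (\<Sum>a\<in>UNIV. x a * \<beta> a * r - (v a)\<^sup>2 / 3 / \<eta>)"
      unfolding G_def
    proof (intro sum_mono)
      fix a
      have "x a * \<beta> a * v a \<le> x a * \<beta> a * r"
        using vr[of a] x[of a] bnn[of a] by (intro mult_left_mono) auto
      moreover have "(v a)\<^sup>2 / 3 \<le> v a - ln (1 + v a)"
        using ln_quad[of "v a"] vr[of a] r2 by simp
      then have "(v a)\<^sup>2 / 3 / \<eta> \<le> (v a - ln (1 + v a)) / \<eta>"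
        by (rule divide_right_mono) (use eta in simp)
      ultimately show "x a * \<beta> a * v a - (v a - ln (1 + v a)) / \<eta>
          \<le> x a * \<beta> a * r - (v a)\<^sup>2 / 3 / \<eta>" by simp
    qed
    also have "\<dots> = r * (\<Sum>a\<in>UNIV. x a * \<beta> a) - r\<^sup>2 / 3 / \<eta>"
      using Sv by (simp add: sum_subtractf sum_distrib_left sum_distrib_right sum_divide_distrib[symmetric] mult.commute)
    also have "\<dots> \<le> r * B - r\<^sup>2 / 3 / \<eta>"
      using xb r0 by simp
    also have "\<dots> < 0"
      using eta B by (simp add: r_def power2_eq_square field_simps)
    finally show False using Gv by simp
  qed
  have "(u a)\<^sup>2 \<le> S" unfolding S_def by (rule member_le_sum) auto
  then have "(u a)\<^sup>2 \<le> r\<^sup>2" using \<open>S \<le> r\<^sup>2\<close> by linarith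
  then have "\<bar>u a\<bar> \<le> r" using r0 by (simp add: power2_le_iff_abs_le)
  moreover have "\<bar>p a - x a\<bar> = x a * \<bar>u a\<bar>"
    using x[of a] by (simp add: u_def abs_div)
  ultimately show ?thesis using x[of a] by (simp add: r_def mult.commute)
qed

lemma argmax_ge:
  assumes "omd_step \<eta> \<beta> x p" "x \<in> prob_simplex \<inter> pos_orthant"
  shows "p \<in> prob_simplex \<inter> pos_orthant"
    "ip x \<beta> - bregman \<eta> x x \<le> ip p \<beta> - bregman \<eta> p x"
  using assms unfolding omd_step_def is_arg_max_def by auto

lemma onestep:
  fixes x' y p' p \<beta> :: "'a::finite \<Rightarrow> real"
  assumes x': "x' \<in> prob_simplex \<inter> pos_orthant"
    and xy: "\<And>a. \<bar>y a - x' a\<bar> \<le> 16 * \<delta> * x' a"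
    and yb: "(\<Sum>a\<in>UNIV. y a * \<beta> a) \<le> C"
    and bnn: "\<And>a. \<beta> a \<ge> 0"
    and d: "\<delta> = \<eta> * C" and eta: "\<eta> > 0" and C: "C > 0" and dsmall: "\<delta> \<le> 1/270"
    and s1: "omd_step \<eta> \<beta> x' p'" and s2: "omd_step \<eta> \<beta> p' p"
  shows "p' \<in> prob_simplex \<inter> pos_orthant"
    "\<And>a. \<bar>p a - p' a\<bar> \<le> 16 * \<delta> * p' a"
    "\<And>a. \<bar>p a - y a\<bar> \<le> 120 * \<delta> * y a"
proof -
  have xpos: "x' a > 0" for a using x' by (auto simp: pos_orthant_def)
  have d0: "\<delta> > 0" using d eta C by simp
  have x2y: "x' a \<le> 2 * y a" for a
  proof -
    have "16 * \<delta> * x' a \<le> (16 / 270) * x' a"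
      using dsmall xpos[of a] by (intro mult_right_mono) auto
    then show ?thesis using xy[of a] xpos[of a] unfolding abs_le_iff by linarith
  qed
  have B1: "(\<Sum>a\<in>UNIV. x' a * \<beta> a) \<le> 2 * C"
  proof -
    have "(\<Sum>a\<in>UNIV. x' a * \<beta> a) \<le> (\<Sum>a\<in>UNIV. 2 * (y a * \<beta> a))"
    proof (intro sum_mono)
      fix a show "x' a * \<beta> a \<le> 2 * (y a * \<beta> a)"
        using mult_right_mono[OF x2y[of a] bnn[of a]] by simp
    qed
    also have "\<dots> \<le> 2 * C" using yb by (simp add: sum_distrib_left[symmetric])
    finally show ?thesis .
  qed
  show p'f: "p' \<in> prob_simplex \<inter> pos_orthant" using argmax_ge[OF s1 x'] by simp
  have p'pos: "p' a > 0" for a using p'f by (auto simp: pos_orthant_def)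
  have c1: "\<bar>p' a - x' a\<bar> \<le> 4 * \<eta> * (2 * C) * x' a" for a
    by (rule core[OF xpos p'pos bnn eta _ B1 _ argmax_ge(2)[OF s1 x']]) (use C d dsmall in auto)
  then have c1': "\<bar>p' a - x' a\<bar> \<le> 8 * \<delta> * x' a" for a using d by (simp add: algebra_simps)
  have p2x: "p' a \<le> 2 * x' a" for a
  proof -
    have "8 * \<delta> * x' a \<le> (8 / 270) * x' a"
      using dsmall xpos[of a] by (intro mult_right_mono) auto
    then show ?thesis using c1'[of a] xpos[of a] unfolding abs_le_iff by linarith
  qed
  have B2: "(\<Sum>a\<in>UNIV. p' a * \<beta> a) \<le> 4 * C"
  proof -
    have "(\<Sum>a\<in>UNIV. p' a * \<beta> a) \<le> (\<Sum>a\<in>UNIV. 2 * (x' a * \<beta> a))"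
    proof (intro sum_mono)
      fix a show "p' a * \<beta> a \<le> 2 * (x' a * \<beta> a)"
        using mult_right_mono[OF p2x[of a] bnn[of a]] by simp
    qed
    also have "\<dots> \<le> 4 * C" using B1 by (simp add: sum_distrib_left[symmetric])
    finally show ?thesis .
  qed
  have c2: "\<bar>p a - p' a\<bar> \<le> 4 * \<eta> * (4 * C) * p' a" for a
    by (rule core[OF p'pos _ bnn eta _ B2 _ argmax_ge(2)[OF s2 p'f]])
      (use C d dsmall argmax_ge(1)[OF s2 p'f] in \<open>auto simp: pos_orthant_def\<close>)
  then show c2': "\<bar>p a - p' a\<bar> \<le> 16 * \<delta> * p' a" for a using d by (simp add: algebra_simps)
  fix a
  have "16 * \<delta> * p' a \<le> 16 * \<delta> * (2 * x' a)"
    using p2x[of a] d0 by simp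
  then have "\<bar>p a - y a\<bar> \<le> 56 * \<delta> * x' a"
    using c2'[of a] c1'[of a] xy[of a] unfolding abs_le_iff by linarith
  also have "\<dots> \<le> 56 * \<delta> * (2 * y a)"
    using x2y[of a] d0 by simp
  also have "\<dots> \<le> 120 * \<delta> * y a"
    using x2y[of a] xpos[of a] d0 by (simp add: mult_right_mono)
  finally show "\<bar>p a - y a\<bar> \<le> 120 * \<delta> * y a" .
qed



theorem mainTheorem6:
  fixes \<pi> \<pi>' \<beta> :: "nat \<Rightarrow> 'a::finite \<Rightarrow> real"
    and K N :: nat and \<eta> C :: real
  assumes K: "K \<ge> 1"
    and N: "N \<ge> 1"
    and C: "C = real N + 1"
    and eta_pos: "\<eta> > 0"
    and eta_le: "\<eta> \<le> 1 / (270 * C)"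
    and init: "\<pi>' 1 = (\<lambda>a. 1 / real CARD('a))" "\<pi> 1 = (\<lambda>a. 1 / real CARD('a))"
    and beta_nonneg: "\<And>k a. k \<in> {1..K} \<Longrightarrow> \<beta> k a \<ge> 0"
    and beta_bound: "\<And>k. k \<in> {1..K} \<Longrightarrow> (\<Sum>a\<in>UNIV. \<pi> k a * \<beta> k a) \<le> C"
    and step1: "\<And>k. k \<in> {1..K} \<Longrightarrow> omd_step \<eta> (\<beta> k) (\<pi>' k) (\<pi>' (k + 1))"
    and step2: "\<And>k. k \<in> {1..K} \<Longrightarrow> omd_step \<eta> (\<beta> k) (\<pi>' (k + 1)) (\<pi> (k + 1))"
  shows "\<forall>k\<in>{1..K}. \<forall>a. \<bar>\<pi> (k + 1) a - \<pi> k a\<bar> \<le> 120 * \<eta> * C * \<pi> k a"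
  proof -
  define \<delta> where "\<delta> = \<eta> * C"
  have C0: "C > 0" using C by simp
  have dsmall: "\<delta> \<le> 1/270"
  proof -
    have "\<delta> \<le> \<eta> * C" by (simp add: \<delta>_def)
    also have "\<dots> \<le> 1 / (270 * C) * C" using eta_le C0 by (intro mult_right_mono) auto
    also have "\<dots> = 1/270" using C0 by simp
    finally show ?thesis .
  qed
  have d0: "\<delta> > 0" using eta_pos C0 by (simp add: \<delta>_def)
  define P where "P k \<longleftrightarrow> \<pi>' k \<in> prob_simplex \<inter> pos_orthant \<and>
     (\<forall>a. \<bar>\<pi> k a - \<pi>' k a\<bar> \<le> 16 * \<delta> * \<pi>' k a)" for k
  have P1: "P 1"
  proof -
    have cpos: "real CARD('a) > 0" by simp
    have "\<pi>' 1 \<in> prob_simplex \<inter> pos_orthant"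
      using init(1) cpos by (simp add: prob_simplex_def pos_orthant_def)
    moreover have "16 * \<delta> * \<pi>' 1 a \<ge> 0" for a using init(1) d0 by simp
    ultimately show ?thesis unfolding P_def using init by simp
  qed
  have stp: "P (k + 1) \<and> (\<forall>a. \<bar>\<pi> (k + 1) a - \<pi> k a\<bar> \<le> 120 * \<delta> * \<pi> k a)"
    if k: "k \<in> {1..K}" and Pk: "P k" for k
  proof -
    have x': "\<pi>' k \<in> prob_simplex \<inter> pos_orthant" and xy: "\<And>a. \<bar>\<pi> k a - \<pi>' k a\<bar> \<le> 16 * \<delta> * \<pi>' k a"
      using Pk unfolding P_def by auto
    note o = onestep[OF x' xy beta_bound[OF k] beta_nonneg[OF k] \<delta>_def eta_pos C0 dsmall step1[OF k] step2[OF k]]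
    show ?thesis using o unfolding P_def by auto
  qed
  have all: "\<forall>k. 1 \<le> k \<longrightarrow> k \<le> K + 1 \<longrightarrow> P k"
  proof
    fix k show "1 \<le> k \<longrightarrow> k \<le> K + 1 \<longrightarrow> P k"
    proof (induction k)
      case 0 then show ?case by simp
    next
      case (Suc j)
      show ?case
      proof (cases "j = 0")
        case True then show ?thesis using P1 by simp
      next
        case False
        then have "j \<in> {1..K} \<longrightarrow> P j" using Suc.IH by auto
        then show ?thesis using stp[of j] False by auto
      qed
    qed
  qed
  show ?thesis
  proof (intro ballI allI)
    fix k a assume k: "k \<in> {1..K}"
    then have "P k" using all by auto
    then have "\<bar>\<pi> (k + 1) a - \<pi> k a\<bar> \<le> 120 * \<delta> * \<pi> k a" using stp[OF k] by blast
    then show "\<bar>\<pi> (k + 1) a - \<pi> k a\<bar> \<le> 120 * \<eta> * C * \<pi> k a"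
      by (simp add: \<delta>_def mult.assoc)
  qed
qed

end
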